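(* Let $n/2 \leq r\leq n$ and let $(\mathcal{S},\mathcal{T})$ be an $r$-maximal cross-intersecting pair in $\binom{[n]}{\leq r}$. For any integer $\ell\ge 0$ with $\ell \le r$ and $n-\ell \leq r$, \[|\mathcal{S}(n-\ell)|+ |\mathcal{T}(n-\ell)| + |\mathcal{S}(\ell)|+ |\mathcal{T}(\ell)| = 2 \binom{n}{\ell}.\]
   Context: $\binom{[n]}{\le r}$ is the set of subsets of $[n]=\{1,\dots,n\}$ of size at most $r$. A pair $(\mathcal{S},\mathcal{T})$ of non-empty families of non-empty subsets is cross-intersecting if $S\cap T\ne\emptyset$ for all $S\in\mathcal{S},T\in\mathcal{T}$; it is $r$-maximal (in $\binom{[n]}{\le r}$) if whenever $(\mathcal{V},\mathcal{W})$ is a cross-intersecting pair in $\binom{[n]}{\le r}$ with $\mathcal{S}\subseteq\mathcal{V}$, $\mathcal{T}\subseteq\mathcal{W}$, then $(\mathcal{V},\mathcal{W})=(\mathcal{S},\mathcal{T})$. For a family $\mathcal{B}$, $\mathcal{B}(\ell)=\{B\in\mathcal{B}:|B|=\ell\}$. *)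

theory Defs
  imports Main
begin

definition sets_le :: "nat \<Rightarrow> nat \<Rightarrow> nat set set" where
  "sets_le n r = {A. A \<subseteq> {1..n} \<and> card A \<le> r}"

definition cross_intersecting :: "'a set set \<Rightarrow> 'a set set \<Rightarrow> bool" where
  "cross_intersecting S T \<longleftrightarrow>
     S \<noteq> {} \<and> T \<noteq> {} \<and> (\<forall>A\<in>S. A \<noteq> {}) \<and> (\<forall>B\<in>T. B \<noteq> {}) \<and>
     (\<forall>A\<in>S. \<forall>B\<in>T. A \<inter> B \<noteq> {})"

definition r_maximal :: "nat \<Rightarrow> nat \<Rightarrow> nat set set \<Rightarrow> nat set set \<Rightarrow> bool" where
  "r_maximal n r S T \<longleftrightarrow>
     S \<subseteq> sets_le n r \<and> T \<subseteq> sets_le n r \<and> cross_intersecting S T \<and>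
     (\<forall>V W. V \<subseteq> sets_le n r \<and> W \<subseteq> sets_le n r \<and> cross_intersecting V W \<and>
            S \<subseteq> V \<and> T \<subseteq> W \<longrightarrow> V = S \<and> W = T)"

definition layer :: "'a set set \<Rightarrow> nat \<Rightarrow> 'a set set" where
  "layer B l = {A \<in> B. card A = l}"

end

theory Submission
  imports Defs
begin

lemma ci_sym: "cross_intersecting S T \<Longrightarrow> cross_intersecting T S"
  unfolding cross_intersecting_def by (metis inf_commute)

lemma rmax_sym: assumes "r_maximal n r S T" shows "r_maximal n r T S"
  unfolding r_maximal_def
proof (intro conjI allI impI)
  show "T \<subseteq> sets_le n r" "S \<subseteq> sets_le n r" "cross_intersecting T S"
    using assms ci_sym unfolding r_maximal_def by auto
  fix V W assume h: "V \<subseteq> sets_le n r \<and> W \<subseteq> sets_le n r \<and> cross_intersecting V W \<and> T \<subseteq> V \<and> S \<subseteq> W"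
  have "cross_intersecting W V" using h ci_sym by blast
  moreover have "\<forall>V W. V \<subseteq> sets_le n r \<and> W \<subseteq> sets_le n r \<and> cross_intersecting V W \<and> S \<subseteq> V \<and> T \<subseteq> W \<longrightarrow> V = S \<and> W = T"
    using assms unfolding r_maximal_def by blast
  ultimately have "W = S \<and> V = T" using h by blast
  thus "V = T" "W = S" by auto
qed

lemma rmax_unfold:
  assumes "r_maximal n r S T" "V \<subseteq> sets_le n r" "W \<subseteq> sets_le n r" "cross_intersecting V W"
    "S \<subseteq> V" "T \<subseteq> W"
  shows "V = S \<and> W = T"
  using assms unfolding r_maximal_def by blast

lemma up_S:
  assumes m: "r_maximal n r S T" and A: "A \<in> S" "A \<subseteq> X" and X: "X \<in> sets_le n r"
  shows "X \<in> S"
proof -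
  have ci: "cross_intersecting S T" and sub: "S \<subseteq> sets_le n r" "T \<subseteq> sets_le n r"
    using m unfolding r_maximal_def by auto
  have "A \<noteq> {}" "\<forall>B\<in>T. A \<inter> B \<noteq> {}" using ci A(1) unfolding cross_intersecting_def by auto
  hence "X \<noteq> {}" "\<forall>B\<in>T. X \<inter> B \<noteq> {}" using A(2) by auto
  hence "cross_intersecting (insert X S) T"
    using ci unfolding cross_intersecting_def by auto
  moreover have "insert X S \<subseteq> sets_le n r" using sub X by blast
  ultimately have "insert X S = S" using rmax_unfold[OF m _ sub(2)] by blast
  thus ?thesis by blast
qed

lemma key:
  assumes m: "r_maximal n r S T" and X: "X \<in> sets_le n r" and Y: "Y \<in> sets_le n r"
    and d: "X \<inter> Y = {}" and u: "X \<union> Y = {1..n}"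
  shows "X \<in> S \<or> Y \<in> T"
proof (cases "Y \<in> T")
  case True thus ?thesis by simp
next
  case False
  have ci: "cross_intersecting S T" and sub: "S \<subseteq> sets_le n r" "T \<subseteq> sets_le n r"
    using m unfolding r_maximal_def by auto
  have "\<exists>A\<in>S. A \<inter> Y = {}"
  proof (rule ccontr)
    assume na: "\<not> (\<exists>A\<in>S. A \<inter> Y = {})"
    have "Y \<noteq> {}" using na ci unfolding cross_intersecting_def by auto
    moreover have "\<forall>A\<in>S. A \<inter> Y \<noteq> {}" using na by auto
    ultimately have "cross_intersecting S (insert Y T)"
      using ci unfolding cross_intersecting_def by auto
    moreover have "insert Y T \<subseteq> sets_le n r" using sub Y by blast
    ultimately have "insert Y T = T" using rmax_unfold[OF m sub(1)] by blast
    thus False using False by blast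
  qed
  then obtain A where A: "A \<in> S" "A \<inter> Y = {}" by blast
  have "A \<subseteq> {1..n}" using A(1) sub unfolding sets_le_def by blast
  hence "A \<subseteq> X" using A(2) u by blast
  thus ?thesis using up_S[OF m A(1) _ X] by blast
qed

lemma disj:
  assumes m: "r_maximal n r S T" and "X \<in> S" "Y \<in> T" shows "X \<inter> Y \<noteq> {}"
  using assms unfolding r_maximal_def cross_intersecting_def by auto

lemma card_filter: "finite L \<Longrightarrow> card {x\<in>L. P x} + card {x\<in>L. \<not> P x} = card L"
proof -
  assume f: "finite L"
  have "L = {x\<in>L. P x} \<union> {x\<in>L. \<not> P x}" by blast
  moreover have "{x\<in>L. P x} \<inter> {x\<in>L. \<not> P x} = {}" by blast
  ultimately show ?thesis using f
    by (metis (no_types, lifting) card_Un_disjoint finite_Un)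
qed

theorem lemma5p1:
  fixes n r l :: nat and S T :: "nat set set"
  assumes "n \<le> 2 * r" and "r \<le> n"
    and "r_maximal n r S T"
    and "l \<le> r" and "n - l \<le> r"
  shows "card (layer S (n - l)) + card (layer T (n - l)) + card (layer S l) + card (layer T l)
         = 2 * (n choose l)"
proof -
  note m = assms(3)
  note m' = rmax_sym[OF m]
  define L where "L = {A. A \<subseteq> {1..n} \<and> card A = l}"
  define c where "c A = {1..n} - A" for A :: "nat set"
  have ln: "l \<le> n" using assms by simp
  have fL: "finite L" unfolding L_def by (rule finite_subset[of _ "Pow {1..n}"]) auto
  have cL: "card L = n choose l" unfolding L_def using n_subsets[of "{1..n}" l] by simp
  have subS: "S \<subseteq> sets_le n r" and subT: "T \<subseteq> sets_le n r"
    using m unfolding r_maximal_def by auto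
  have inL: "A \<in> sets_le n r" and cinL: "c A \<in> sets_le n r" and cA: "card (c A) = n - l"
    and dA: "A \<inter> c A = {}" and uA: "A \<union> c A = {1..n}" if "A \<in> L" for A
  proof -
    have Asub: "A \<subseteq> {1..n}" and cardA: "card A = l" using that unfolding L_def by auto
    show "card (c A) = n - l" unfolding c_def using Asub cardA
      by (simp add: card_Diff_subset finite_subset)
    thus "c A \<in> sets_le n r" unfolding sets_le_def c_def using assms(5) by auto
    show "A \<in> sets_le n r" unfolding sets_le_def using Asub cardA assms(4) by auto
    show "A \<inter> c A = {}" "A \<union> c A = {1..n}" unfolding c_def using Asub by auto
  qed
  have layl: "layer B l = {A\<in>L. A \<in> B}" if "B \<subseteq> sets_le n r" for B
    using that unfolding layer_def L_def sets_le_def by blast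
  have laynl: "layer B (n - l) = c ` {A\<in>L. c A \<in> B}" if "B \<subseteq> sets_le n r" for B
  proof
    show "c ` {A\<in>L. c A \<in> B} \<subseteq> layer B (n - l)"
      using cA unfolding layer_def by auto
  next
    show "layer B (n - l) \<subseteq> c ` {A\<in>L. c A \<in> B}"
    proof
      fix X assume X: "X \<in> layer B (n - l)"
      hence Xs: "X \<subseteq> {1..n}" "card X = n - l" "X \<in> B"
        using that unfolding layer_def sets_le_def by auto
      have "c X \<in> L" unfolding L_def c_def using Xs ln
        by (simp add: card_Diff_subset finite_subset)
      moreover have "c (c X) = X" unfolding c_def using Xs by auto
      ultimately show "X \<in> c ` {A\<in>L. c A \<in> B}" using Xs(3) by (metis (mono_tags, lifting) image_eqI mem_Collect_eq)
    qed
  qed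
  have injc: "inj_on c L" unfolding inj_on_def c_def L_def by blast
  have cardnl: "card (layer B (n - l)) = card {A\<in>L. c A \<in> B}" if "B \<subseteq> sets_le n r" for B
    unfolding laynl[OF that]
    by (rule card_image, rule inj_on_subset[OF injc]) auto
  have e1: "{A\<in>L. c A \<in> T} = {A\<in>L. \<not> A \<in> S}"
  proof -
    have "A \<in> S \<or> c A \<in> T" "\<not> (A \<in> S \<and> c A \<in> T)" if "A \<in> L" for A
      using key[OF m inL[OF that] cinL[OF that] dA[OF that] uA[OF that]]
        disj[OF m, of A "c A"] dA[OF that] by auto
    thus ?thesis by blast
  qed
  have e2: "{A\<in>L. c A \<in> S} = {A\<in>L. \<not> A \<in> T}"
  proof -
    have "A \<in> T \<or> c A \<in> S" "\<not> (A \<in> T \<and> c A \<in> S)" if "A \<in> L" for A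
      using key[OF m' inL[OF that] cinL[OF that] dA[OF that] uA[OF that]]
        disj[OF m', of A "c A"] dA[OF that] by auto
    thus ?thesis by blast
  qed
  have s1: "card {A\<in>L. A \<in> S} + card {A\<in>L. c A \<in> T} = card L"
    unfolding e1 by (rule card_filter[OF fL])
  have s2: "card {A\<in>L. A \<in> T} + card {A\<in>L. c A \<in> S} = card L"
    unfolding e2 by (rule card_filter[OF fL])
  show ?thesis
    unfolding cardnl[OF subS] cardnl[OF subT] layl[OF subS] layl[OF subT]
    using s1 s2 cL by simp
qed

end
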